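(* Let $d\ge2$, let $\mathbf A,\mathbf B\in\overline{\mathbb Q}[t]$ be nonzero coprime polynomials, $\mathbf c=\mathbf A/\mathbf B$, let $\lambda\in\overline{\mathbb Q}^*$ and let $|\cdot|_v$ be an absolute value on $\overline{\mathbb Q}$. Then the limit $\lim_{n\to\infty}\frac{\log M_{n,v}(\lambda)}{d^n}$ exists, and for each $n_0\ge1$, $$\left|\lim_{n\to\infty}\frac{\log M_{n,v}(\lambda)}{d^n}-\frac{\log M_{n_0,v}(\lambda)}{d^{n_0}}\right|\le\frac{\log(2\max\{1,|\lambda|_v\})-\log(\min\{1,|\lambda|_v\})}{d^{n_0}(d-1)}.$$
   Context: The polynomials $\mathbf A_{\mathbf c,n},\mathbf B_{\mathbf c,n}$ are defined by: $\mathbf A_{\mathbf c,0}=\mathbf A$, $\mathbf B_{\mathbf c,0}=\mathbf B$; if $\mathbf A(0)\neq0$ then $\mathbf A_{\mathbf c,1}=\mathbf A^d+t\mathbf B^d$, $\mathbf B_{\mathbf c,1}=\mathbf A\mathbf B^{d-1}$, while if $\mathbf A(0)=0$ then $\mathbf A_{\mathbf c,1}=(\mathbf A^d+t\mathbf B^d)/t$, $\mathbf B_{\mathbf c,1}=\mathbf A\mathbf B^{d-1}/t$; for $n\ge1$, $\mathbf A_{\mathbf c,n+1}=\mathbf A_{\mathbf c,n}^d+t\mathbf B_{\mathbf c,n}^d$, $\mathbf B_{\mathbf c,n+1}=\mathbf A_{\mathbf c,n}\mathbf B_{\mathbf c,n}^{d-1}$. Then $M_{n,v}(\lambda)=\max\{|\mathbf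 A_{\mathbf c,n}(\lambda)|_v,|\mathbf B_{\mathbf c,n}(\lambda)|_v\}$. *)

theory Defs
  imports "HOL-Analysis.Analysis" "HOL-Computational_Algebra.Polynomial"
begin

text \<open>The algebraic closure of Q is modelled as the algebraic complex numbers.\<close>

definition alg_poly :: "complex poly \<Rightarrow> bool" where
  "alg_poly p \<longleftrightarrow> (\<forall>i. algebraic (coeff p i))"

text \<open>An absolute value on the field of algebraic numbers (values off it are irrelevant).\<close>
definition abs_value_alg :: "(complex \<Rightarrow> real) \<Rightarrow> bool" where
  "abs_value_alg v \<longleftrightarrow>
     (\<forall>x. algebraic x \<longrightarrow> v x \<ge> 0) \<and>
     (\<forall>x. algebraic x \<longrightarrow> (v x = 0 \<longleftrightarrow> x = 0)) \<and>
     (\<forall>x y. algebraic x \<longrightarrow> algebraic y \<longrightarrow> v (x * y) = v x * v y) \<and>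
     (\<forall>x y. algebraic x \<longrightarrow> algebraic y \<longrightarrow> v (x + y) \<le> v x + v y)"

fun AB_seq :: "nat \<Rightarrow> complex poly \<Rightarrow> complex poly \<Rightarrow> nat \<Rightarrow> complex poly \<times> complex poly" where
  "AB_seq d A B 0 = (A, B)"
| "AB_seq d A B (Suc 0) =
     (if poly A 0 \<noteq> 0 then (A ^ d + [:0, 1:] * B ^ d, A * B ^ (d - 1))
      else ((A ^ d + [:0, 1:] * B ^ d) div [:0, 1:], (A * B ^ (d - 1)) div [:0, 1:]))"
| "AB_seq d A B (Suc (Suc n)) =
     (let (An, Bn) = AB_seq d A B (Suc n) in (An ^ d + [:0, 1:] * Bn ^ d, An * Bn ^ (d - 1)))"

definition M_nv :: "nat \<Rightarrow> complex poly \<Rightarrow> complex poly \<Rightarrow> (complex \<Rightarrow> real) \<Rightarrow> nat \<Rightarrow> complex \<Rightarrow> real" where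
  "M_nv d A B v n x = max (v (poly (fst (AB_seq d A B n)) x)) (v (poly (snd (AB_seq d A B n)) x))"

end

theory Submission
  imports Defs "HOL-Algebra.Finite_Extensions"
begin

definition CR :: "complex ring" where "CR = \<lparr>carrier = UNIV, mult = (*), one = 1, zero = 0, add = (+)\<rparr>"
lemma cCR[simp]: "carrier CR = UNIV" "add CR = (+)" "mult CR = (*)" "zero CR = 0" "one CR = 1"
  by (auto simp: CR_def)
lemma fCR: "field CR"
proof -
  have "\<exists>y. x + y = 0" for x :: complex
    using add.right_inverse by blast
  moreover have "x \<noteq> 0 \<Longrightarrow> \<exists>y. x * y = 1" for x :: complex
    by (rule exI[of _ "inverse x"]) auto
  ultimately show ?thesis
    unfolding CR_def using add.right_inverse
    by unfold_locales (auto simp:algebra_simps Units_def)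
qed
lemma powCR[simp]: "x [^]\<^bsub>CR\<^esub> (n::nat) = x ^ n"
proof -
  interpret field CR by (rule fCR)
  show ?thesis by (induction n) (auto simp: mult.commute)
qed
lemma negCR[simp]: "\<ominus>\<^bsub>CR\<^esub> x = - x"
proof -
  interpret field CR by (rule fCR)
  have "\<ominus>\<^bsub>CR\<^esub> x + x = 0" using l_neg[of x] by simp
  thus ?thesis by (simp add: eq_neg_iff_add_eq_0)
qed
lemma invCR[simp]: "x \<noteq> 0 \<Longrightarrow> inv\<^bsub>CR\<^esub> x = inverse x"
proof -
  interpret field CR by (rule fCR)
  assume "x \<noteq> 0"
  then show ?thesis using inv_unique'[of x "inverse x"] by simp
qed

lemma evalCR: "ring.eval CR p x = poly (Poly (rev p)) x"
proof -
  interpret field CR by (rule fCR)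
  show ?thesis
    by (induction p) (auto simp: Poly_append poly_monom mult.commute)
qed

lemma subfield_Rats: "subfield \<rat> CR"
proof -
  interpret field CR by (rule fCR)
  show ?thesis
    by (rule subfieldI'[OF subringI]) auto
qed

lemma alg_iff: "algebraic (x::complex) \<longleftrightarrow> (ring.algebraic CR over \<rat>) x"
proof -
  interpret field CR by (rule fCR)
  have sr: "subring \<rat> CR" using subfield_Rats subfieldE(1) by blast
  show ?thesis
  proof
    assume "Polynomial.algebraic x"
    then obtain p where p: "\<forall>i. poly.coeff p i \<in> \<rat>" "p \<noteq> 0" "poly p x = 0"
      using algebraic_altdef by blast
    define P where "P = rev (coeffs p)"
    have "P \<in> carrier (\<rat>[X]\<^bsub>CR\<^esub>)"
      using p by (auto simp: P_def univ_poly_def polynomial_def hd_rev last_coeffs_eq_coeff_degree coeffs_def)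
    moreover have "P \<noteq> []" using p by (simp add: P_def)
    moreover have "eval P x = 0" using p by (simp add: evalCR P_def)
    ultimately show "(algebraic over \<rat>) x" using algebraicI[of P] by simp
  next
    assume "(algebraic over \<rat>) x"
    then obtain P where P: "P \<in> carrier (\<rat>[X]\<^bsub>CR\<^esub>)" "P \<noteq> []" "eval P x = 0"
      using algebraicE[OF sr, of x] by auto
    define p where "p = Poly (rev P)"
    have setP: "set P \<subseteq> \<rat>" and hdP: "hd P \<noteq> 0"
      using P by (auto simp: univ_poly_def polynomial_def)
    have "p \<noteq> 0"
    proof
      assume "p = 0"
      then obtain n where "rev P = replicate n 0" by (auto simp: p_def Poly_eq_0)
      hence "P = replicate n 0" by (metis rev_replicate rev_rev_ident)
      with P(2) hdP show False by (cases n) auto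
    qed
    moreover have "\<forall>i. poly.coeff p i \<in> \<rat>"
      using setP by (auto simp: p_def nth_default_def) (metis nth_mem length_rev set_rev subsetD)
    moreover have "poly p x = 0" using P(3) by (simp add: evalCR p_def)
    ultimately show "Polynomial.algebraic x" using algebraic_altdef by blast
  qed
qed

lemma alg_add: "algebraic (x::complex) \<Longrightarrow> algebraic y \<Longrightarrow> algebraic (x + y)"
  and alg_mult: "algebraic (x::complex) \<Longrightarrow> algebraic y \<Longrightarrow> algebraic (x * y)"
proof -
  interpret field CR by (rule fCR)
  have S: "subfield {x \<in> carrier CR. (algebraic over \<rat>) x} CR"
    by (rule subfield_of_algebraics[OF subfield_Rats])
  show "Polynomial.algebraic x \<Longrightarrow> Polynomial.algebraic y \<Longrightarrow> Polynomial.algebraic (x + y)"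
    using subringE(7)[OF subfieldE(1)[OF S]] by (auto simp: alg_iff)
  show "Polynomial.algebraic x \<Longrightarrow> Polynomial.algebraic y \<Longrightarrow> Polynomial.algebraic (x * y)"
    using subringE(6)[OF subfieldE(1)[OF S]] by (auto simp: alg_iff)
qed

lemma alg_one: "algebraic (1::complex)" by (rule rat_imp_algebraic) simp

lemma alg_power: "algebraic (x::complex) \<Longrightarrow> algebraic (x ^ n)"
  by (induction n) (auto intro: alg_mult alg_one)

lemma alg_sum: "(\<And>i. i \<in> I \<Longrightarrow> algebraic (f i :: complex)) \<Longrightarrow> algebraic (sum f I)"
  by (induction I rule: infinite_finite_induct) (auto intro: alg_add)

lemma alg_poly_eval: "alg_poly p \<Longrightarrow> algebraic (x::complex) \<Longrightarrow> algebraic (poly p x)"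
  unfolding poly_altdef alg_poly_def
  by (intro alg_sum alg_mult alg_power) auto

lemma alg_divide: "algebraic (x::complex) \<Longrightarrow> algebraic y \<Longrightarrow> algebraic (x / y)"
  unfolding divide_inverse by (intro alg_mult algebraic_inverse)


lemma step_upper:
  fixes Xv Yv S P \<alpha> :: real
  assumes "Xv \<ge> 0" "Yv \<ge> 0" "\<alpha> > 0" "S \<le> Xv^d + \<alpha>*Yv^d" "P = Xv*Yv^(d-1)" "d \<ge> 1"
  shows "max S P \<le> 2 * max 1 \<alpha> * (max Xv Yv)^d"
proof -
  define M where "M = max Xv Yv"
  have M0: "M \<ge> 0" using assms by (simp add: M_def)
  have "Xv^d \<le> M^d" "Yv^d \<le> M^d" "Yv^(d-1) \<le> M^(d-1)"
    using assms by (auto simp: M_def intro!: power_mono)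
  have "Xv*Yv^(d-1) \<le> M*M^(d-1)"
    by (rule mult_mono) (use assms \<open>Yv^(d-1) \<le> M^(d-1)\<close> in \<open>auto simp: M_def\<close>)
  also have "M*M^(d-1) = M^d" using assms by (cases d) auto
  finally have P: "P \<le> M^d" using assms by simp
  have "\<alpha>*Yv^d \<le> \<alpha>*M^d" using \<open>Yv^d \<le> M^d\<close> assms by simp
  hence "S \<le> (1+\<alpha>) * M^d" using assms(4) \<open>Xv^d \<le> M^d\<close> by (simp add: algebra_simps del: mult_le_cancel_left_pos)
  also have "\<dots> \<le> 2 * max 1 \<alpha> * M^d"
    by (rule mult_right_mono) (use M0 in auto)
  finally have "S \<le> 2 * max 1 \<alpha> * M^d" .
  moreover have "M^d \<le> 2 * max 1 \<alpha> * M^d"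
    using M0 by (simp add: mult_le_cancel_right1 max_def)
  ultimately show ?thesis using P by (simp add: M_def)
qed

lemma step_lower:
  fixes Xv Yv S P \<alpha> c :: real
  assumes "Xv \<ge> 0" "Yv \<ge> 0" "\<alpha> > 0" "S \<ge> Xv^d - \<alpha>*Yv^d" "S \<ge> \<alpha>*Yv^d - Xv^d" "P = Xv*Yv^(d-1)" "d \<ge> 1"
    "0 \<le> c" "c \<le> 1/2" "\<alpha>*c \<le> 1/2" "2*c \<le> \<alpha>"
  shows "c * (max Xv Yv)^d \<le> max S P"
proof (cases "Yv \<le> Xv")
  case True
  have pd: "Z^d = Z * Z^(d-1)" for Z :: real using assms by (cases d) auto
  have "Yv^d \<le> P" unfolding pd[of Yv] assms(6) by (rule mult_right_mono) (use True assms in auto)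
  show ?thesis
  proof (cases "c * Xv^d \<le> P")
    case True thus ?thesis using \<open>Yv \<le> Xv\<close> by (simp add: max_def)
  next
    case False
    have "\<alpha>*Yv^d \<le> \<alpha>*P" using \<open>Yv^d \<le> P\<close> assms by simp
    also have "\<dots> \<le> \<alpha>*(c*Xv^d)" using False assms by simp
    also have "\<dots> = (\<alpha>*c)*Xv^d" by (simp add: mult_ac)
    also have "\<dots> \<le> (1/2)*Xv^d" using assms(10) assms(1) by (intro mult_right_mono) auto
    finally have h1: "\<alpha>*Yv^d \<le> (1/2)*Xv^d" .
    have h2: "c*Xv^d \<le> (1/2)*Xv^d" using assms(9) assms(1) by (intro mult_right_mono) auto
    have "c*Xv^d \<le> S" using h1 h2 assms(4) by linarith
    thus ?thesis using \<open>Yv \<le> Xv\<close> by (simp add: max_def)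
  qed
next
  case False
  have pd: "Z^d = Z * Z^(d-1)" for Z :: real using assms by (cases d) auto
  have "Xv^d \<le> P" unfolding pd[of Xv] assms(6)
    by (rule mult_left_mono) (use False assms in \<open>auto intro!: power_mono\<close>)
  show ?thesis
  proof (cases "c * Yv^d \<le> P")
    case True thus ?thesis using False by (simp add: max_def)
  next
    case F2: False
    have "c * Yv^d \<le> (\<alpha> - c)*Yv^d" using assms(2,11) by (intro mult_right_mono) auto
    hence "c*Yv^d \<le> \<alpha>*Yv^d - c*Yv^d" by (simp add: left_diff_distrib)
    hence "c*Yv^d \<le> S" using F2 \<open>Xv^d \<le> P\<close> assms(5) by linarith
    thus ?thesis using False by (simp add: max_def)
  qed
qed

lemma geo:
  fixes w :: "nat \<Rightarrow> real"
  assumes b: "\<And>k. \<bar>w (Suc k) - w k\<bar> \<le> B * q^k" and q: "0 \<le> q" "q < 1"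
  shows "\<exists>L. w \<longlonglongrightarrow> L \<and> (\<forall>n. \<bar>L - w n\<bar> \<le> B*q^n/(1-q))"
proof -
  define \<delta> where "\<delta> k = w (Suc k) - w k" for k
  have sg: "summable (\<lambda>k. B*q^k)" using q by (intro summable_mult summable_geometric) auto
  have sd: "summable \<delta>"
    by (rule summable_comparison_test'[OF sg, of 0]) (unfold \<delta>_def real_norm_def, rule b)
  have tel: "w n = w 0 + (\<Sum>k<n. \<delta> k)" for n by (induction n) (auto simp: \<delta>_def)
  define L where "L = w 0 + suminf \<delta>"
  have eqw: "w = (\<lambda>n. w 0 + (\<Sum>k<n. \<delta> k))" by (rule ext) (rule tel)
  have H: "(\<lambda>n. w 0 + (\<Sum>k<n. \<delta> k)) \<longlonglongrightarrow> L" unfolding L_def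
    by (intro tendsto_add tendsto_const summable_LIMSEQ sd)
  have "w \<longlonglongrightarrow> L" using H unfolding eqw[symmetric] .
  moreover have "\<bar>L - w n\<bar> \<le> B*q^n/(1-q)" for n
  proof -
    have eq: "L - w n = (\<Sum>i. \<delta> (i+n))"
      using suminf_split_initial_segment[OF sd, of n] by (simp add: L_def tel[of n])
    have sdn: "summable (\<lambda>i. \<delta> (i+n))" using sd by (simp add: summable_iff_shift)
    have sgn: "summable (\<lambda>i. B*q^(i+n))" using sg by (simp add: summable_iff_shift)
    have gsum: "(\<Sum>i. B*q^(i+n)) = B*q^n/(1-q)"
    proof -
      have "(\<Sum>i. B*q^(i+n)) = (\<Sum>i. (B*q^n)*q^i)" by (simp add: power_add mult_ac)
      also have "\<dots> = B*q^n * (\<Sum>i. q^i)" using q by (intro suminf_mult summable_geometric) auto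
      also have "\<dots> = B*q^n/(1-q)" using q by (simp add: suminf_geometric)
      finally show ?thesis .
    qed
    have "(\<Sum>i. \<delta> (i+n)) \<le> (\<Sum>i. B*q^(i+n))"
      by (rule suminf_le[OF _ sdn sgn]) (use b in \<open>auto simp: \<delta>_def abs_le_iff\<close>)
    moreover have "(\<Sum>i. - \<delta> (i+n)) \<le> (\<Sum>i. B*q^(i+n))"
      by (rule suminf_le[OF _ summable_minus[OF sdn] sgn]) (use b in \<open>auto simp: \<delta>_def abs_le_iff\<close>)
    moreover have "(\<Sum>i. - \<delta> (i+n)) = - (\<Sum>i. \<delta> (i+n))" by (rule suminf_minus[OF sdn])
    ultimately show ?thesis using eq gsum by auto
  qed
  ultimately show ?thesis by blast
qed


theorem corollary5p3:
  fixes d :: nat and A B :: "complex poly" and lam :: complex and v :: "complex \<Rightarrow> real"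
  assumes "d \<ge> 2"
    and "alg_poly A" and "alg_poly B" and "A \<noteq> 0" and "B \<noteq> 0" and "coprime A B"
    and "algebraic lam" and "lam \<noteq> 0"
    and "abs_value_alg v"
  shows "\<exists>L. (\<lambda>n. ln (M_nv d A B v n lam) / real d ^ n) \<longlonglongrightarrow> L \<and>
    (\<forall>n0\<ge>1. \<bar>L - ln (M_nv d A B v n0 lam) / real d ^ n0\<bar>
       \<le> (ln (2 * max 1 (v lam)) - ln (min 1 (v lam))) / (real d ^ n0 * (real d - 1)))"
proof -
  note V = assms(9)[unfolded abs_value_alg_def]
  have vnn: "algebraic x \<Longrightarrow> v x \<ge> 0" for x using V by blast
  have v0: "algebraic x \<Longrightarrow> v x = 0 \<longleftrightarrow> x = 0" for x using V by blast
  have vm: "algebraic x \<Longrightarrow> algebraic y \<Longrightarrow> v (x*y) = v x * v y" for x y using V by blast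
  have vt: "algebraic x \<Longrightarrow> algebraic y \<Longrightarrow> v (x+y) \<le> v x + v y" for x y using V by blast
  have v1: "v 1 = 1"
  proof -
    have "v 1 * (v 1 - 1) = 0" using vm[OF alg_one alg_one] by (simp add: algebra_simps)
    moreover have "v 1 \<noteq> 0" using v0[OF alg_one] by simp
    ultimately show ?thesis by simp
  qed
  have vp: "algebraic x \<Longrightarrow> v (x^n) = v x ^ n" for x n
    by (induction n) (simp_all add: v1 vm alg_power)
  have algm1: "algebraic (-1::complex)" by (rule rat_imp_algebraic) simp
  have vm1: "v (-1) = 1"
  proof -
    have "v (-1) * v (-1) = 1" using vm[OF algm1 algm1] v1 by simp
    hence "(v (-1) - 1) * (v (-1) + 1) = 0" by (simp add: algebra_simps)
    moreover have "v (-1) + 1 > 0" using vnn[OF algm1] by simp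
    ultimately show ?thesis by simp
  qed
  have vneg: "algebraic x \<Longrightarrow> v (-x) = v x" for x
    using vm[OF algm1, of x] vm1 by simp
  have algneg: "algebraic x \<Longrightarrow> algebraic (-x)" for x :: complex by simp

  define a where "a n = poly (fst (AB_seq d A B n)) lam" for n
  define b where "b n = poly (snd (AB_seq d A B n)) lam" for n
  have recA: "a (Suc (Suc n)) = a (Suc n)^d + lam * b (Suc n)^d" for n
    by (simp add: a_def b_def case_prod_beta Let_def)
  have recB: "b (Suc (Suc n)) = a (Suc n) * b (Suc n)^(d-1)" for n
    by (simp add: a_def b_def case_prod_beta Let_def)
  have a0: "a 0 = poly A lam" and b0: "b 0 = poly B lam" by (simp_all add: a_def b_def)
  have alg0: "algebraic (a 0)" "algebraic (b 0)"
    using a0 b0 alg_poly_eval assms(2,3,7) by auto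
  obtain k where dk: "d = Suc k" using assms(1) by (cases d) auto
  have one: "(a 1 = a 0^d + lam*b 0^d \<and> b 1 = a 0*b 0^(d-1)) \<or>
             (lam * a 1 = a 0^d + lam*b 0^d \<and> lam * b 1 = a 0*b 0^(d-1))"
  proof (cases "poly A 0 = 0")
    case False
    thus ?thesis by (simp add: a_def b_def a0 b0 One_nat_def)
  next
    case True
    define Tt where "Tt = [:0,1::complex:]"
    have X0: "Tt \<noteq> 0" by (simp add: Tt_def)
    have "Tt dvd A" using True poly_eq_0_iff_dvd[of A 0] by (simp add: Tt_def)
    then obtain A' where A': "A = Tt * A'" by (auto elim: dvdE)
    define Q1 where "Q1 = Tt^k * A'^d + B^d"
    define Q2 where "Q2 = A' * B^(d-1)"
    have e1: "A^d + Tt*B^d = Tt * Q1"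
      by (simp add: Q1_def A' dk power_mult_distrib algebra_simps)
    have e2: "A * B^(d-1) = Tt * Q2" by (simp add: Q2_def A' mult.assoc)
    have "AB_seq d A B (Suc 0) = ((A^d + Tt*B^d) div Tt, (A*B^(d-1)) div Tt)"
      using True by (subst AB_seq.simps(2)) (simp add: Tt_def)
    also have "\<dots> = (Q1, Q2)" by (simp only: e1 e2 nonzero_mult_div_cancel_left[OF X0])
    finally have AB1: "AB_seq d A B 1 = (Q1, Q2)" by (simp only: One_nat_def)
    have "lam * a 1 = poly (Tt * Q1) lam" unfolding a_def AB1 by (simp add: Tt_def)
    also have "\<dots> = poly (A^d + Tt*B^d) lam" by (simp only: e1)
    also have "\<dots> = a 0^d + lam*b 0^d" by (simp add: Tt_def a0 b0)
    finally have 1: "lam * a 1 = a 0^d + lam*b 0^d" .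
    have "lam * b 1 = poly (Tt * Q2) lam" unfolding b_def AB1 by (simp add: Tt_def)
    also have "\<dots> = poly (A * B^(d-1)) lam" by (simp only: e2)
    also have "\<dots> = a 0*b 0^(d-1)" by (simp add: a0 b0)
    finally show ?thesis using 1 by simp
  qed
  have alg1: "algebraic (a 1) \<and> algebraic (b 1)"
  proof -
    have h1: "algebraic (a 0^d + lam*b 0^d)" "algebraic (a 0*b 0^(d-1))"
      using alg0 assms(7) by (auto intro!: alg_add alg_mult alg_power)
    have "a 1 = (lam * a 1) / lam" "b 1 = (lam * b 1) / lam" using assms(8) by auto
    thus ?thesis using one h1 assms(7) alg_divide by metis
  qed
  have algS: "algebraic (a (Suc n)) \<and> algebraic (b (Suc n))" for n
    by (induction n) (use alg1 assms(7) in \<open>auto simp: recA recB intro!: alg_add alg_mult alg_power\<close>)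
  have alga: "algebraic (a n)" and algb: "algebraic (b n)" for n
    using algS alg0 by (cases n; auto)+

  define \<alpha> where "\<alpha> = v lam"
  have \<alpha>pos: "\<alpha> > 0" using vnn[OF assms(7)] v0[OF assms(7)] assms(8) by (simp add: \<alpha>_def)
  define M where "M n = max (v (a n)) (v (b n))" for n
  have Meq: "M_nv d A B v n lam = M n" for n by (simp add: M_nv_def M_def a_def b_def)
  define c where "c = min 1 \<alpha> / (2 * max 1 \<alpha>)"
  have c0: "c > 0" using \<alpha>pos by (simp add: c_def)
  have c1: "c \<le> 1/2" "\<alpha> * c \<le> 1/2" "2 * c \<le> \<alpha>"
  proof -
    have "c \<le> 1/2 \<and> \<alpha> * c \<le> 1/2 \<and> 2 * c \<le> \<alpha>"
    proof (cases "\<alpha> \<le> 1")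
      case True
      hence cc: "c = \<alpha>/2" by (simp add: c_def min_def max_def)
      have "\<alpha> * \<alpha> \<le> 1" using True \<alpha>pos by (simp add: mult_le_one)
      moreover have "\<alpha> * c = (\<alpha> * \<alpha>) / 2" using cc by simp
      ultimately show ?thesis using True cc by linarith
    next
      case False
      hence cc: "c = 1/(2*\<alpha>)" by (simp add: c_def min_def max_def)
      have "\<alpha> * c = 1/2" using \<alpha>pos cc by simp
      moreover have "c \<le> 1/2" unfolding cc by (rule divide_left_mono) (use False in auto)
      moreover have "2 * c \<le> 1" using calculation by linarith
      ultimately show ?thesis using False by simp
    qed
    thus "c \<le> 1/2" "\<alpha> * c \<le> 1/2" "2 * c \<le> \<alpha>" by auto
  qed
  have step: "M (Suc (Suc n)) \<le> 2 * max 1 \<alpha> * M (Suc n)^d \<and> c * M (Suc n)^d \<le> M (Suc (Suc n))" for n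
  proof -
    define x where "x = a (Suc n)"
    define y where "y = b (Suc n)"
    have ax: "algebraic x" "algebraic y" using alga algb by (simp_all add: x_def y_def)
    have ax2: "algebraic (x^d)" "algebraic (lam * y^d)"
      using ax assms(7) by (simp_all add: alg_mult alg_power)
    define S where "S = v (x^d + lam*y^d)"
    have MS: "M (Suc (Suc n)) = max S (v x * v y^(d-1))"
    proof -
      have "a (Suc (Suc n)) = x^d + lam*y^d" by (simp add: recA x_def y_def)
      moreover have "b (Suc (Suc n)) = x*y^(d-1)" by (simp add: recB x_def y_def)
      moreover have "v (x*y^(d-1)) = v x * v y^(d-1)"
        using vm[OF ax(1) alg_power[OF ax(2)]] vp[OF ax(2)] by simp
      ultimately show ?thesis by (simp add: M_def S_def)
    qed
    have vxd: "v (x^d) = v x^d" and vly: "v (lam * y^d) = \<alpha> * v y^d"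
      using ax assms(7) by (simp_all add: vp vm alg_power \<alpha>_def)
    have su: "S \<le> v x^d + \<alpha> * v y^d" using vt[OF ax2] vxd vly by (simp add: S_def)
    have "v (x^d) \<le> S + v (-(lam*y^d))"
      using vt[OF alg_add[OF ax2] algneg[OF ax2(2)]] by (simp add: S_def)
    hence sl1: "S \<ge> v x^d - \<alpha> * v y^d" using vneg[OF ax2(2)] vxd vly by simp
    have "v (lam*y^d) \<le> S + v (-(x^d))"
      using vt[OF alg_add[OF ax2] algneg[OF ax2(1)]] by (simp add: S_def)
    hence sl2: "S \<ge> \<alpha> * v y^d - v x^d" using vneg[OF ax2(1)] vxd vly by simp
    have Mx: "M (Suc n) = max (v x) (v y)" by (simp add: M_def x_def y_def)
    have "d \<ge> 1" using assms(1) by simp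
    show ?thesis
      using step_upper[OF vnn[OF ax(1)] vnn[OF ax(2)] \<alpha>pos su refl \<open>d \<ge> 1\<close>]
            step_lower[OF vnn[OF ax(1)] vnn[OF ax(2)] \<alpha>pos sl1 sl2 refl \<open>d \<ge> 1\<close> less_imp_le[OF c0] c1]
      unfolding MS Mx by simp
  qed
  have M1: "M 1 > 0"
  proof (rule ccontr)
    assume "\<not> M 1 > 0"
    hence "v (a 1) = 0" "v (b 1) = 0"
      using vnn[OF alga[of 1]] vnn[OF algb[of 1]] unfolding M_def by (auto simp: max_def split: if_splits)
    hence z: "a 1 = 0" "b 1 = 0" using v0[OF alga] v0[OF algb] by auto
    have e: "a 0^d + lam*b 0^d = 0" "a 0*b 0^(d-1) = 0" using one z by auto
    have "a 0 = 0 \<and> b 0 = 0"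
    proof (cases "a 0 = 0")
      case True thus ?thesis using e(1) assms(8) dk by auto
    next
      case False
      hence "b 0 = 0" using e(2) by simp
      thus ?thesis using e(1) dk by auto
    qed
    hence "[:-lam,1:] dvd A" "[:-lam,1:] dvd B"
      using poly_eq_0_iff_dvd a0 b0 by auto
    hence "is_unit [:-lam,1:]" using coprime_common_divisor assms(6) by blast
    thus False using is_unit_iff_degree[of "[:-lam,1:]"] by simp
  qed
  have Mpos: "M (Suc n) > 0" for n
  proof (induction n)
    case 0 thus ?case using M1 by simp
  next
    case (Suc n)
    have "0 < c * M (Suc n)^d" using c0 Suc by simp
    thus ?case using step[of n] by linarith
  qed
  define C where "C = ln (2 * max 1 \<alpha>) - ln (min 1 \<alpha>)"
  define u where "u n = ln (M n) / real d ^ n" for n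
  have dpos: "real d > 1" using assms(1) by simp
  have diff: "\<bar>u (Suc (Suc n)) - u (Suc n)\<bar> \<le> C / real d ^ (Suc (Suc n))" for n
  proof -
    let ?m = "M (Suc n)" and ?m' = "M (Suc (Suc n))"
    have mp: "?m > 0" "?m' > 0" using Mpos by auto
    have up: "ln ?m' \<le> ln (2 * max 1 \<alpha>) + d * ln ?m"
    proof -
      have "ln ?m' \<le> ln (2 * max 1 \<alpha> * ?m^d)"
        using step[of n] mp by (subst ln_le_cancel_iff) auto
      also have "\<dots> = ln (2 * max 1 \<alpha>) + d * ln ?m"
        using mp by (simp add: ln_mult ln_realpow)
      finally show ?thesis .
    qed
    have lo: "ln c + d * ln ?m \<le> ln ?m'"
    proof -
      have "ln (c * ?m^d) \<le> ln ?m'"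
        using step[of n] mp c0 by (subst ln_le_cancel_iff) auto
      moreover have "ln (c * ?m^d) = ln c + d * ln ?m"
        using mp c0 by (simp add: ln_mult ln_realpow)
      ultimately show ?thesis by simp
    qed
    have lnc: "ln c = - C"
      using \<alpha>pos by (simp add: c_def C_def ln_div min_def max_def)
    have lmin: "ln (min 1 \<alpha>) \<le> 0" using \<alpha>pos by (simp add: min_def)
    have bnd: "\<bar>ln ?m' - d * ln ?m\<bar> \<le> C" using up lo lnc lmin by (simp add: C_def abs_le_iff)
    have "u (Suc (Suc n)) - u (Suc n) = (ln ?m' - d * ln ?m) / real d ^ (Suc (Suc n))"
      using dpos by (simp add: u_def field_simps)
    also have "\<bar>\<dots>\<bar> \<le> C / real d ^ (Suc (Suc n))"
      using bnd dpos by (simp add: divide_right_mono)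
    finally show ?thesis .
  qed
  have g: "\<bar>u (Suc (Suc k)) - u (Suc k)\<bar> \<le> (C / real d^2) * (1 / real d)^k" for k
  proof -
    have "C / real d ^ (Suc (Suc k)) = (C / real d^2) * (1 / real d)^k"
      using dpos by (simp add: power_one_over field_simps power2_eq_square)
    thus ?thesis using diff[of k] by simp
  qed
  obtain L where L: "(\<lambda>k. u (Suc k)) \<longlonglongrightarrow> L"
    "\<And>n. \<bar>L - u (Suc n)\<bar> \<le> (C / real d^2) * (1 / real d)^n / (1 - 1 / real d)"
    using geo[of "\<lambda>k. u (Suc k)", OF g] dpos by auto
  have "u \<longlonglongrightarrow> L" using L(1) by (simp add: filterlim_sequentially_Suc)
  moreover have "\<bar>L - u n0\<bar> \<le> C / (real d ^ n0 * (real d - 1))" if n0: "n0 \<ge> 1" for n0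
  proof -
    obtain m where m: "n0 = Suc m" using n0 by (cases n0) auto
    have "(C / real d^2) * (1 / real d)^m / (1 - 1 / real d) = C / (real d ^ n0 * (real d - 1))"
      using dpos by (simp add: m power_one_over field_simps power2_eq_square)
    thus ?thesis using L(2)[of m] m by simp
  qed
  ultimately show ?thesis
    unfolding Meq u_def[symmetric] C_def \<alpha>_def[symmetric] by blast
qed
end
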